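(* Let $0<\alpha<1$, $\beta\in\mathbb{R}$, and for $x>0$ let ${}^C D_x^\alpha f(x)=\frac{1}{\Gamma(1-\alpha)}\int_0^x (x-t)^{-\alpha}f'(t)\,dt$ denote the Caputo fractional derivative. Then for $x>0$, $${}^C D_x^{\alpha}\big[\tanh(\beta x)\big]=\sum_{l=0}^{\infty}C_\alpha^l\,\frac{d^l}{dx^l}\!\left(\frac{1}{\cosh(\beta x)}\right)\frac{\beta\,x^{1-\alpha+l}}{\Gamma(2+l-\alpha)}\;{}_1F_2\!\left(1;\frac{2+l-\alpha}{2},\frac{3+l-\alpha}{2};\frac{\beta^2x^2}{4}\right),$$ where $C_\alpha^l=\frac{\Gamma(\alpha+1)}{\Gamma(l+1)\Gamma(\alpha-l+1)}$ is the generalized binomial coefficient.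
   Context: ${}_1F_2(a;b_1,b_2;z)=\sum_{k\ge0}\frac{(a)_k}{(b_1)_k(b_2)_k}\frac{z^k}{k!}$, with $(a)_k$ the Pochhammer symbol. *)

theory Defs
  imports "HOL-Analysis.Analysis"
begin

definition hyp1F2 :: "real \<Rightarrow> real \<Rightarrow> real \<Rightarrow> real \<Rightarrow> real" where
  "hyp1F2 a b1 b2 z =
     (\<Sum>k. pochhammer a k / (pochhammer b1 k * pochhammer b2 k) * z ^ k / fact k)"

definition caputo :: "real \<Rightarrow> (real \<Rightarrow> real) \<Rightarrow> real \<Rightarrow> real" where
  "caputo \<alpha> f x = (1 / Gamma (1 - \<alpha>)) *
     integral {0..x} (\<lambda>t. (x - t) powr (-\<alpha>) * deriv f t)"

definition gen_binom :: "real \<Rightarrow> nat \<Rightarrow> real" where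
  "gen_binom \<alpha> l = Gamma (\<alpha> + 1) / (Gamma (real l + 1) * Gamma (\<alpha> - real l + 1))"

end

theory Submission
  imports Defs "HOL-Complex_Analysis.Complex_Analysis"
begin


lemma cosh_complex_zero:
  fixes w :: complex
  assumes "cosh w = 0"
  shows "Re w = 0 \<and> pi/2 \<le> \<bar>Im w\<bar>"
proof -
  from assms have "cos (\<i>*w) = 0" by (simp add: cosh_conv_cos)
  then obtain n :: int where n: "\<i>*w = complex_of_real(n * pi) + of_real pi/2"
    by (auto simp: cos_eq_0)
  hence w: "w = - \<i> * (complex_of_real(n * pi) + of_real pi/2)"
    by (metis (no_types, lifting) i_squared minus_minus more_arith_simps(11) mult.assoc mult.left_commute mult_1 mult_minus_left)
  have "Re w = 0" using w by simp
  moreover have "Im w = - (n*pi + pi/2)" using w by simp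
  moreover have "pi/2 \<le> \<bar>n*pi + pi/2\<bar>"
  proof (cases "n \<ge> 0")
    case True then show ?thesis by (simp add: pi_ge_zero)
  next
    case False then have "n \<le> -1" by simp
    then have "real_of_int n \<le> -1" by simp
    then have "real_of_int n * pi \<le> -1 * pi" using pi_gt_zero
      by (intro mult_right_mono) auto
    then show ?thesis using abs_ge_minus_self[of "real_of_int n*pi+pi/2"] by linarith
  qed
  ultimately show ?thesis by (metis abs_minus_cancel)
qed

lemma real_complex_deriv:
  fixes G :: "complex \<Rightarrow> complex" and g :: "real \<Rightarrow> real"
  assumes "G holomorphic_on A" "open A" "\<And>y::real. complex_of_real y \<in> A"
    and "\<And>y. complex_of_real (g y) = G (of_real y)"
  shows "(g has_real_derivative Re (deriv G (of_real y))) (at y)"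
    and "complex_of_real (deriv g y) = deriv G (of_real y)"
proof -
  have d: "(G has_field_derivative deriv G (of_real y)) (at (of_real y))"
    using holomorphic_derivI[OF assms(1,2,3)] .
  have v: "((\<lambda>t. complex_of_real (g t)) has_vector_derivative deriv G (of_real y)) (at y)"
    using has_vector_derivative_real_field[OF d] assms(4) by simp
  have vr: "((\<lambda>t. Re (complex_of_real (g t))) has_vector_derivative Re (deriv G (of_real y))) (at y)"
    using bounded_linear.has_vector_derivative[OF bounded_linear_Re v] .
  have vi: "((\<lambda>t. Im (complex_of_real (g t))) has_vector_derivative Im (deriv G (of_real y))) (at y)"
    using bounded_linear.has_vector_derivative[OF bounded_linear_Im v] .
  have "((\<lambda>t. 0::real) has_vector_derivative Im (deriv G (of_real y))) (at y)" using vi by simp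
  moreover have "((\<lambda>t. 0::real) has_vector_derivative 0) (at y)" by simp
  ultimately have im0: "Im (deriv G (of_real y)) = 0"
    using vector_derivative_unique_at by blast
  show g: "(g has_real_derivative Re (deriv G (of_real y))) (at y)"
    using vr by (simp add: has_real_derivative_iff_has_vector_derivative)
  have "deriv g y = Re (deriv G (of_real y))" using DERIV_imp_deriv[OF g] .
  then show "complex_of_real (deriv g y) = deriv G (of_real y)"
    using im0 by (simp add: complex_eq_iff)
qed

lemma real_complex_higher_deriv:
  fixes G :: "complex \<Rightarrow> complex" and g :: "real \<Rightarrow> real"
  assumes "G holomorphic_on A" "open A" "\<And>y::real. complex_of_real y \<in> A"
    and "\<And>y. complex_of_real (g y) = G (of_real y)"
  shows "complex_of_real ((deriv ^^ n) g y) = (deriv ^^ n) G (of_real y)"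
proof (induction n arbitrary: y)
  case 0 then show ?case using assms(4) by simp
next
  case (Suc n)
  have "complex_of_real (deriv ((deriv ^^ n) g) y) = deriv ((deriv ^^ n) G) (of_real y)"
    by (rule real_complex_deriv(2)[OF holomorphic_higher_deriv[OF assms(1,2)] assms(2,3) Suc.IH])
  then show ?case by simp
qed



lemma cosh_of_real_complex: "cosh (complex_of_real r) = complex_of_real (cosh r)"
  by (simp add: cosh_field_def flip: exp_of_real)

lemma taylor_sech:
  fixes \<beta> x :: real
  assumes b: "\<beta> \<noteq> 0" and x: "x > 0"
  defines "s \<equiv> \<lambda>y. 1 / cosh (\<beta> * y)"
  defines "a \<equiv> \<lambda>m. (deriv ^^ m) s x / fact m"
  shows "\<And>t. t \<in> {0..x} \<Longrightarrow> (\<lambda>m. a m * (t - x) ^ m) sums s t"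
    and "\<And>t. t \<in> {0..x} \<Longrightarrow> (\<lambda>m. a m * (of_nat m * (t - x) ^ (m - 1))) sums deriv s t"
    and "summable (\<lambda>m. \<bar>a m\<bar> * x ^ m)"
    and "summable (\<lambda>m. \<bar>a m\<bar> * (of_nat m * x ^ (m - 1)))"
proof -
  define S where "S = (\<lambda>z::complex. 1 / cosh (complex_of_real \<beta> * z))"
  define \<Omega> where "\<Omega> = {z::complex. cosh (complex_of_real \<beta> * z) \<noteq> 0}"
  have opn: "open \<Omega>" unfolding \<Omega>_def
    by (intro open_Collect_neq continuous_intros)
  have hc: "(\<lambda>z. cosh (complex_of_real \<beta> * z)) holomorphic_on \<Omega>"
    unfolding cosh_field_def by (intro holomorphic_intros) auto
  have hol: "S holomorphic_on \<Omega>" unfolding S_def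
    using hc by (intro holomorphic_intros) (auto simp: \<Omega>_def)
  have real_in: "complex_of_real y \<in> \<Omega>" for y
    unfolding \<Omega>_def by (simp flip: of_real_mult add: cosh_of_real_complex)
  have base: "complex_of_real (s y) = S (complex_of_real y)" for y
    unfolding s_def S_def by (simp flip: of_real_mult add: cosh_of_real_complex)
  have hd: "complex_of_real ((deriv ^^ n) s y) = (deriv ^^ n) S (complex_of_real y)" for n y
    by (rule real_complex_higher_deriv[OF hol opn real_in base])
  define R where "R = sqrt (x^2 + (pi / (2 * \<bar>\<beta>\<bar>))^2)"
  have Rx: "x < R"
  proof -
    have "x^2 < x^2 + (pi / (2 * \<bar>\<beta>\<bar>))^2" using b by simp
    then have "sqrt (x^2) < R" unfolding R_def by (rule real_sqrt_less_mono)
    then show ?thesis using x by simp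
  qed
  have ball_sub: "ball (complex_of_real x) R \<subseteq> \<Omega>"
  proof
    fix z assume z: "z \<in> ball (complex_of_real x) R"
    show "z \<in> \<Omega>"
    proof (rule ccontr)
      assume "z \<notin> \<Omega>"
      then have "cosh (complex_of_real \<beta> * z) = 0" unfolding \<Omega>_def by simp
      from cosh_complex_zero[OF this] have
        r0: "\<beta> * Re z = 0" and im: "pi/2 \<le> \<bar>\<beta> * Im z\<bar>" by simp_all
      from r0 b have rz: "Re z = 0" by simp
      from im have "pi/2 \<le> \<bar>\<beta>\<bar> * \<bar>Im z\<bar>" by (simp add: abs_mult)
      then have imz: "pi / (2 * \<bar>\<beta>\<bar>) \<le> \<bar>Im z\<bar>" using b
        by (simp add: field_simps)
      have dz: "dist (complex_of_real x) z = sqrt (x^2 + (Im z)^2)"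
        using rz by (simp add: dist_norm cmod_def power2_eq_square)
      have "(pi / (2 * \<bar>\<beta>\<bar>))^2 \<le> \<bar>Im z\<bar>^2"
        using imz by (intro power_mono) (auto simp: pi_ge_zero)
      then have sq: "(pi / (2 * \<bar>\<beta>\<bar>))^2 \<le> (Im z)^2" by simp
      have "sqrt (x^2 + (Im z)^2) \<ge> R" unfolding R_def
        using sq by (intro real_sqrt_le_mono add_left_mono)
      then show False using z dz by simp
    qed
  qed
  have holb: "S holomorphic_on ball (complex_of_real x) R"
    using hol ball_sub holomorphic_on_subset by blast
  have holdb: "deriv S holomorphic_on ball (complex_of_real x) R"
    using holomorphic_deriv[OF hol opn] ball_sub holomorphic_on_subset by blast
  have coef: "(deriv ^^ n) S (complex_of_real x) / fact n = complex_of_real (a n)" for n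
    unfolding a_def by (simp add: hd[symmetric])
  have coefd: "(deriv ^^ n) (deriv S) (complex_of_real x) / fact n
        = complex_of_real (a (Suc n) * of_nat (Suc n))" for n
  proof -
    have "(deriv ^^ n) (deriv S) = (deriv ^^ Suc n) S" by (metis funpow_Suc_right comp_apply)
    then have "(deriv ^^ n) (deriv S) (complex_of_real x) / fact n
        = complex_of_real ((deriv ^^ Suc n) s x / fact n)" using hd[of "Suc n" x] by simp
    also have "(deriv ^^ Suc n) s x / fact n = a (Suc n) * of_nat (Suc n)"
      unfolding a_def fact_Suc of_nat_mult by (simp add: field_simps del: of_nat_Suc)
    finally show ?thesis .
  qed
  have inball: "complex_of_real t \<in> ball (complex_of_real x) R" if "\<bar>t - x\<bar> < R" for t
    using that by (simp add: dist_norm flip: of_real_diff)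
  show "(\<lambda>m. a m * (t - x) ^ m) sums s t" if t: "t \<in> {0..x}" for t
  proof -
    have "\<bar>t - x\<bar> < R" using t Rx by auto
    from holomorphic_power_series[OF holb inball[OF this]]
    have "(\<lambda>n. complex_of_real (a n * (t - x) ^ n)) sums complex_of_real (s t)"
      by (simp add: coef base)
    then show ?thesis by (simp only: sums_of_real_iff)
  qed
  show "(\<lambda>m. a m * (of_nat m * (t - x) ^ (m - 1))) sums deriv s t" if t: "t \<in> {0..x}" for t
  proof -
    have "\<bar>t - x\<bar> < R" using t Rx by auto
    from holomorphic_power_series[OF holdb inball[OF this]]
    have "(\<lambda>n. complex_of_real (a (Suc n) * of_nat (Suc n) * (t - x) ^ n)) sums deriv S (complex_of_real t)"
      by (simp add: coefd)
    also have "deriv S (complex_of_real t) = complex_of_real (deriv s t)"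
      using hd[of 1 t] by simp
    finally have "(\<lambda>n. a (Suc n) * of_nat (Suc n) * (t - x) ^ n) sums deriv s t"
      by (simp only: sums_of_real_iff)
    then have "(\<lambda>n. (\<lambda>m. a m * (of_nat m * (t - x) ^ (m - 1))) (Suc n)) sums deriv s t"
      by (simp add: mult_ac)
    then have "(\<lambda>m. a m * (of_nat m * (t - x) ^ (m - 1))) sums (deriv s t + (\<lambda>m. a m * (of_nat m * (t - x) ^ (m - 1))) 0)" by (rule sums_Suc)
    then show ?thesis by simp
  qed
  define r where "r = (x + R) / 2"
  have r: "x < r" "r < R" using Rx unfolding r_def by auto
  have "\<bar>(x + r) - x\<bar> < R" using r x by auto
  note inr = inball[OF this]
  have "summable (\<lambda>n. complex_of_real (a n) * complex_of_real r ^ n)"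
    using sums_summable[OF holomorphic_power_series[OF holb inr]] by (simp add: coef)
  from powser_insidea[OF this, of "complex_of_real x"] r x
  show "summable (\<lambda>m. \<bar>a m\<bar> * x ^ m)" by (simp add: norm_mult norm_power)
  have cm: "cmod (1 + complex_of_nat n) = 1 + real n" for n
    using norm_of_nat[of "Suc n", where 'a=complex] by simp
  have "summable (\<lambda>n. complex_of_real (a (Suc n) * of_nat (Suc n)) * complex_of_real r ^ n)"
    using sums_summable[OF holomorphic_power_series[OF holdb inr]] by (simp add: coefd)
  from powser_insidea[OF this, of "complex_of_real x"] r x
  have "summable (\<lambda>n. \<bar>a (Suc n)\<bar> * of_nat (Suc n) * x ^ n)"
    by (simp add: norm_mult norm_power abs_mult cm)
  then have "summable (\<lambda>n. (\<lambda>m. \<bar>a m\<bar> * (of_nat m * x ^ (m - 1))) (Suc n))"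
    by (simp add: mult_ac)
  then show "summable (\<lambda>m. \<bar>a m\<bar> * (of_nat m * x ^ (m - 1)))"
    using summable_Suc_iff[where f="\<lambda>m. \<bar>a m\<bar> * (of_nat m * x ^ (m - 1))"] by blast
qed



lemma beta_scaled:
  fixes \<mu> x :: real and n :: nat
  assumes mu: "\<mu> > 0" and x: "x > 0"
  shows "((\<lambda>t. (x - t) powr (\<mu> - 1) * t ^ n) has_integral
           (x powr (\<mu> + real n) * (fact n * Gamma \<mu> / Gamma (\<mu> + real n + 1)))) {0..x}"
proof -
  have B: "((\<lambda>u. u powr (real n + 1 - 1) * (1 - u) powr (\<mu> - 1)) has_integral Beta (real n + 1) \<mu>) (cbox 0 1)"
    using has_integral_Beta_real[of "real n + 1" \<mu>] mu by simp
  have "((\<lambda>t. (\<lambda>u. u powr (real n + 1 - 1) * (1 - u) powr (\<mu> - 1)) ((1/x) *\<^sub>R t + 0))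
          has_integral (Beta (real n + 1) \<mu> /\<^sub>R (1/x) ^ DIM(real)))
          (cbox ((0 - 0) /\<^sub>R (1/x)) ((1 - 0) /\<^sub>R (1/x)))"
    by (rule has_integral_affinity'[OF B]) (use x in simp)
  then have "((\<lambda>t. (t/x) powr real n * (1 - t/x) powr (\<mu> - 1)) has_integral (x * Beta (real n + 1) \<mu>)) {0..x}"
    by (simp add: cbox_interval divide_inverse mult.commute)
  then have I: "((\<lambda>t. x powr (real n + \<mu> - 1) * ((t/x) powr real n * (1 - t/x) powr (\<mu> - 1)))
      has_integral (x powr (real n + \<mu> - 1) * (x * Beta (real n + 1) \<mu>))) {0..x}"
    by (rule has_integral_mult_right)
  have val: "x powr (real n + \<mu> - 1) * (x * Beta (real n + 1) \<mu>)
      = x powr (\<mu> + real n) * (fact n * Gamma \<mu> / Gamma (\<mu> + real n + 1))"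
  proof -
    have "x powr (real n + \<mu> - 1) * x powr 1 = x powr (real n + \<mu> - 1 + 1)"
      by (rule powr_add[symmetric])
    then have "x powr (real n + \<mu> - 1) * x = x powr (\<mu> + real n)"
      using x by (simp add: algebra_simps)
    moreover have "Beta (real n + 1) \<mu> = fact n * Gamma \<mu> / Gamma (\<mu> + real n + 1)"
    proof -
      have "Gamma (real n + 1) = (fact n :: real)"
        using Gamma_fact[of n, where 'a=real] by (simp add: add.commute)
      then show ?thesis unfolding Beta_def by (simp add: algebra_simps)
    qed
    ultimately show ?thesis by (metis mult.assoc)
  qed
  show ?thesis
  proof (rule has_integral_spike_finite[of "{0}"])
    show "finite {0::real}" by simp
  next
    fix t assume t: "t \<in> {0..x} - {0}"
    then have t0: "t > 0" and tx: "t \<le> x" by auto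
    have "(t/x) powr real n = t ^ n / x powr real n"
      using t0 x by (simp add: powr_divide powr_realpow)
    moreover have "(1 - t/x) powr (\<mu> - 1) = (x - t) powr (\<mu> - 1) / x powr (\<mu> - 1)"
    proof -
      have "1 - t/x = (x - t) / x" using x by (simp add: field_simps)
      then show ?thesis using tx x by (simp add: powr_divide)
    qed
    moreover have "x powr (real n + \<mu> - 1) = x powr real n * x powr (\<mu> - 1)"
      using x by (simp add: powr_add[symmetric] algebra_simps)
    ultimately show "(x - t) powr (\<mu> - 1) * t ^ n =
        x powr (real n + \<mu> - 1) * ((t/x) powr real n * (1 - t/x) powr (\<mu> - 1))"
      using x by (simp add: field_simps)
  next
    show "((\<lambda>t. x powr (real n + \<mu> - 1) * ((t/x) powr real n * (1 - t/x) powr (\<mu> - 1))) has_integral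
        (x powr (\<mu> + real n) * (fact n * Gamma \<mu> / Gamma (\<mu> + real n + 1)))) {0..x}"
      using I val by simp
  qed
qed



lemma aux_div: fixes c p a :: real assumes "c \<noteq> 0" "c * p = a" shows "p = a / c"
  using assms by (simp add: field_simps)

lemma hyp_term_eq:
  fixes \<mu> x \<beta> :: real and k :: nat
  assumes mu: "\<mu> > 0" and x: "x > 0"
  shows "x powr \<mu> / \<mu> * (pochhammer 1 k / (pochhammer ((\<mu>+1)/2) k * pochhammer ((\<mu>+2)/2) k)
            * (\<beta>^2 * x^2 / 4) ^ k / fact k)
       = \<beta> ^ (2*k) * (x powr (\<mu> + real (2*k)) * (Gamma \<mu> / Gamma (\<mu> + real (2*k) + 1)))"
proof -
  have pd: "pochhammer (\<mu> + 1) (2*k) = 4^k * (pochhammer ((\<mu>+1)/2) k * pochhammer ((\<mu>+2)/2) k)"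
  proof -
    have a1: "2 * ((\<mu>+1)/2) = \<mu>+1" by simp
    have a2: "(\<mu>+1)/2 + 1/2 = (\<mu>+2)/2" by (simp add: field_simps)
    have a3: "of_nat (2^(2*k)) = (4::real)^k" by (simp add: power_mult)
    show ?thesis using pochhammer_double[of "(\<mu>+1)/2" k] unfolding a1 a2 a3 by (simp add: mult.assoc)
  qed
  have notint: "\<mu> + 1 \<notin> \<int>\<^sub>\<le>\<^sub>0" using mu
    by (auto elim!: nonpos_Ints_cases)
  have pg: "pochhammer (\<mu> + 1) (2*k) = Gamma (\<mu> + 1 + real (2*k)) / Gamma (\<mu> + 1)"
    using pochhammer_Gamma[OF notint, of "2*k"] by simp
  have g1: "Gamma (\<mu> + 1) = \<mu> * Gamma \<mu>"
    using Gamma_plus1[of \<mu>] mu nonpos_Ints_nonpos[of \<mu>] by fastforce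
  have gpos: "Gamma (\<mu> + 1 + real (2*k)) > 0" "Gamma \<mu> > 0" using mu by auto
  have P: "pochhammer ((\<mu>+1)/2) k * pochhammer ((\<mu>+2)/2) k
      = Gamma (\<mu> + 1 + real (2*k)) / (4^k * (\<mu> * Gamma \<mu>))"
  proof -
    have "4^k * (pochhammer ((\<mu>+1)/2) k * pochhammer ((\<mu>+2)/2) k) = Gamma (\<mu> + 1 + real (2*k)) / (\<mu> * Gamma \<mu>)"
      using pd pg g1 by simp
    then have "pochhammer ((\<mu>+1)/2) k * pochhammer ((\<mu>+2)/2) k = Gamma (\<mu> + 1 + real (2*k)) / (\<mu> * Gamma \<mu>) / 4^k"
      by (rule aux_div[rotated]) simp
    then show ?thesis by (simp add: mult.commute)
  qed
  have xp: "x powr (\<mu> + real (2*k)) = x powr \<mu> * x ^ (2*k)"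
    using x powr_realpow[OF x, of "2*k"] by (simp add: powr_add)
  have fk: "pochhammer 1 k = (fact k :: real)" by (simp add: pochhammer_fact)
  have pw: "(y^2)^k = (y^k)^2" for y :: real by (metis power_mult mult.commute)
  show ?thesis
    unfolding P xp fk using mu gpos pw
    by (simp add: field_simps power_mult_distrib power_mult)
qed

lemma hyp_integral:
  fixes \<mu> x \<beta> :: real
  assumes mu: "\<mu> > 0" and x: "x > 0"
  shows "((\<lambda>t. (x - t) powr (\<mu> - 1) * cosh (\<beta> * t)) has_integral
          (x powr \<mu> / \<mu> * hyp1F2 1 ((\<mu>+1)/2) ((\<mu>+2)/2) (\<beta>^2 * x^2 / 4))) {0..x}"
proof -
  define c where "c n = (if even n then \<beta>^n * (x powr (\<mu> + real n) * (Gamma \<mu> / Gamma (\<mu> + real n + 1))) else 0)" for n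
  define e where "e n t = (if even n then (\<beta>*t)^n / fact n else 0)" for n and t :: real
  define G where "G n t = (x - t) powr (\<mu> - 1) * e n t" for n t
  define F where "F N t = (\<Sum>n<N. G n t)" for N t
  have GI: "(G n has_integral c n) {0..x}" for n
  proof (cases "even n")
    case True
    have "((\<lambda>t. \<beta>^n / fact n * ((x - t) powr (\<mu> - 1) * t ^ n)) has_integral
          (\<beta>^n / fact n * (x powr (\<mu> + real n) * (fact n * Gamma \<mu> / Gamma (\<mu> + real n + 1))))) {0..x}"
      by (rule has_integral_mult_right[OF beta_scaled[OF mu x]])
    then show ?thesis using True unfolding G_def e_def c_def
      by (simp add: power_mult_distrib field_simps)
  next
    case False
    then show ?thesis unfolding G_def e_def c_def by simp
  qed
  have FI: "(F N has_integral (\<Sum>n<N. c n)) {0..x}" for N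
    unfolding F_def by (rule has_integral_sum) (auto intro: GI)
  define h where "h t = (x - t) powr (\<mu> - 1) * cosh (\<beta> * x)" for t
  have hI: "h integrable_on {0..x}"
  proof -
    have "((\<lambda>t. (x - t) powr (\<mu> - 1) * t ^ 0 * cosh (\<beta> * x)) has_integral
        (x powr (\<mu> + real 0) * (fact 0 * Gamma \<mu> / Gamma (\<mu> + real 0 + 1)) * cosh (\<beta> * x))) {0..x}"
      by (rule has_integral_mult_left[OF beta_scaled[OF mu x]])
    then show ?thesis unfolding h_def integrable_on_def by auto
  qed
  have esums: "(\<lambda>n. e n t) sums cosh (\<beta> * t)" for t
    using cosh_converges[of "\<beta> * t"] unfolding e_def
  proof -
    assume h: "(\<lambda>n. if even n then (\<beta> * t) ^ n /\<^sub>R fact n else 0) sums cosh (\<beta> * t)"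
    have "(\<lambda>n. if even n then (\<beta> * t) ^ n /\<^sub>R fact n else 0) = (\<lambda>n. if even n then (\<beta> * t) ^ n / fact n else 0)"
      by (rule ext) (simp add: scaleR_conv_of_real divide_inverse mult.commute)
    then show "(\<lambda>n. if even n then (\<beta> * t) ^ n / fact n else 0) sums cosh (\<beta> * t)" using h by simp
  qed
  have enn: "e n t \<ge> 0" for n t
    unfolding e_def by (auto simp: zero_le_even_power)
  have bound: "norm (F N t) \<le> h t" if t: "t \<in> {0..x}" for N t
  proof -
    have "(\<Sum>n<N. e n t) \<le> cosh (\<beta> * t)"
      using sum_le_suminf[OF sums_summable[OF esums] , of "{..<N}"] enn sums_unique[OF esums[of t]]
      by auto
    also have "cosh (\<beta> * t) \<le> cosh (\<beta> * x)"
    proof -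
      have "\<bar>\<beta> * t\<bar> \<le> \<bar>\<beta> * x\<bar>" using t by (auto simp: abs_mult intro: mult_left_mono)
      then have "cosh \<bar>\<beta> * t\<bar> \<le> cosh \<bar>\<beta> * x\<bar>"
        by (subst cosh_real_nonneg_le_iff) auto
      then show ?thesis by simp
    qed
    finally have le: "(\<Sum>n<N. e n t) \<le> cosh (\<beta> * x)" .
    have "F N t = (x - t) powr (\<mu> - 1) * (\<Sum>n<N. e n t)"
      unfolding F_def G_def by (simp add: sum_distrib_left)
    moreover have "(\<Sum>n<N. e n t) \<ge> 0" by (intro sum_nonneg enn)
    ultimately show ?thesis unfolding h_def using le
      by (simp add: abs_mult mult_left_mono)
  qed
  have conv: "(\<lambda>N. F N t) \<longlonglongrightarrow> (x - t) powr (\<mu> - 1) * cosh (\<beta> * t)" for t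
  proof -
    have "(\<lambda>N. \<Sum>n<N. e n t) \<longlonglongrightarrow> cosh (\<beta> * t)" using esums[of t] by (simp add: sums_def)
    then have "(\<lambda>N. (x - t) powr (\<mu> - 1) * (\<Sum>n<N. e n t)) \<longlonglongrightarrow> (x - t) powr (\<mu> - 1) * cosh (\<beta> * t)"
      by (intro tendsto_mult_left)
    then show ?thesis unfolding F_def G_def by (simp add: sum_distrib_left)
  qed
  note dc = dominated_convergence[of F "{0..x}" h "\<lambda>t. (x - t) powr (\<mu> - 1) * cosh (\<beta> * t)"]
  have Fint: "F N integrable_on {0..x}" for N using FI by blast
  have gint: "(\<lambda>t. (x - t) powr (\<mu> - 1) * cosh (\<beta> * t)) integrable_on {0..x}"
    using dc(1)[OF Fint hI bound conv] by blast
  have lim: "(\<lambda>N. \<Sum>n<N. c n) \<longlonglongrightarrow> integral {0..x} (\<lambda>t. (x - t) powr (\<mu> - 1) * cosh (\<beta> * t))"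
    using dc(2)[OF Fint hI bound conv] by (simp add: integral_unique[OF FI])
  then have csums: "c sums integral {0..x} (\<lambda>t. (x - t) powr (\<mu> - 1) * cosh (\<beta> * t))"
    by (simp add: sums_def)
  have "(\<lambda>k. c (2*k)) sums integral {0..x} (\<lambda>t. (x - t) powr (\<mu> - 1) * cosh (\<beta> * t))"
  proof (subst sums_mono_reindex)
    show "strict_mono (\<lambda>k::nat. 2*k)" by (auto simp: strict_mono_def)
    show "c n = 0" if "n \<notin> range (\<lambda>k::nat. 2*k)" for n
      using that unfolding c_def by (auto elim!: evenE)
  qed (rule csums)
  define hT where "hT k = pochhammer 1 k / (pochhammer ((\<mu>+1)/2) k * pochhammer ((\<mu>+2)/2) k)
            * (\<beta>^2 * x^2 / 4) ^ k / fact k" for k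
  define I where "I = integral {0..x} (\<lambda>t. (x - t) powr (\<mu> - 1) * cosh (\<beta> * t))"
  note S0 = \<open>(\<lambda>k. c (2*k)) sums integral {0..x} (\<lambda>t. (x - t) powr (\<mu> - 1) * cosh (\<beta> * t))\<close>
  have ceq: "c (2*k) = x powr \<mu> / \<mu> * hT k" for k
    unfolding hT_def hyp_term_eq[OF mu x] c_def by simp
  have S1: "(\<lambda>k. x powr \<mu> / \<mu> * hT k) sums I" using S0 unfolding ceq I_def .
  have S2: "(\<lambda>k. \<mu> / x powr \<mu> * (x powr \<mu> / \<mu> * hT k)) sums (\<mu> / x powr \<mu> * I)"
    by (rule sums_mult[OF S1])
  have "(\<lambda>k. \<mu> / x powr \<mu> * (x powr \<mu> / \<mu> * hT k)) = hT" using mu x by (auto simp: fun_eq_iff)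
  with S2 have "hT sums (\<mu> / x powr \<mu> * I)" by simp
  then have "(\<lambda>k. pochhammer 1 k / (pochhammer ((\<mu>+1)/2) k * pochhammer ((\<mu>+2)/2) k)
            * (\<beta>^2 * x^2 / 4) ^ k / fact k) sums (integral {0..x} (\<lambda>t. (x - t) powr (\<mu> - 1) * cosh (\<beta> * t)) / (x powr \<mu> / \<mu>))"
    unfolding hT_def I_def by (simp add: field_simps)
  then have "hyp1F2 1 ((\<mu>+1)/2) ((\<mu>+2)/2) (\<beta>^2 * x^2 / 4)
      = integral {0..x} (\<lambda>t. (x - t) powr (\<mu> - 1) * cosh (\<beta> * t)) / (x powr \<mu> / \<mu>)"
    unfolding hyp1F2_def by (rule sums_unique[symmetric])
  then have "x powr \<mu> / \<mu> * hyp1F2 1 ((\<mu>+1)/2) ((\<mu>+2)/2) (\<beta>^2 * x^2 / 4)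
      = integral {0..x} (\<lambda>t. (x - t) powr (\<mu> - 1) * cosh (\<beta> * t))"
    using mu x by simp
  then show ?thesis using gint by (simp add: has_integral_integral)
qed



lemma frac_not_int:
  fixes \<alpha> r :: real
  assumes "0 < \<alpha>" "\<alpha> < 1" "r \<in> \<int>"
  shows "\<alpha> + r \<notin> \<int>\<^sub>\<le>\<^sub>0"
proof
  assume "\<alpha> + r \<in> \<int>\<^sub>\<le>\<^sub>0"
  then have "\<alpha> + r \<in> \<int>" using nonpos_Ints_Int by blast
  then have "\<alpha> + r - r \<in> \<int>" using assms(3) by (intro Ints_diff)
  then have "\<alpha> \<in> \<int>" by simp
  then obtain n where "\<alpha> = of_int n" by (auto elim: Ints_cases)
  with assms(1,2) show False by auto
qed

lemma gamma_refl_shift: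
  fixes \<alpha> :: real
  assumes a0: "0 < \<alpha>" and a1: "\<alpha> < 1"
  shows "Gamma \<alpha> * Gamma (1 - \<alpha>) = (-1)^m * (Gamma (\<alpha> - real m) * Gamma (1 - \<alpha> + real m))"
proof (induction m)
  case 0 then show ?case by simp
next
  case (Suc m)
  have n1: "\<alpha> - real m - 1 \<notin> \<int>\<^sub>\<le>\<^sub>0"
    using frac_not_int[OF a0 a1, of "- real m - 1"] by (simp add: algebra_simps)
  have n2: "1 - \<alpha> + real m \<notin> \<int>\<^sub>\<le>\<^sub>0"
  proof -
    have "1 - \<alpha> + real m > 0" using a1 by simp
    then show ?thesis using nonpos_Ints_nonpos by fastforce
  qed
  have g1: "Gamma (\<alpha> - real m) = (\<alpha> - real m - 1) * Gamma (\<alpha> - real m - 1)"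
    using Gamma_plus1[OF n1] by simp
  have g2: "Gamma (1 - \<alpha> + real (Suc m)) = (1 - \<alpha> + real m) * Gamma (1 - \<alpha> + real m)"
    using Gamma_plus1[OF n2] by (simp add: algebra_simps)
  have "Gamma (\<alpha> - real (Suc m)) * Gamma (1 - \<alpha> + real (Suc m))
      = - (Gamma (\<alpha> - real m) * Gamma (1 - \<alpha> + real m))"
    unfolding g1 g2 by (simp add: algebra_simps)
  then show ?case using Suc.IH by simp
qed

lemma aux3:
  fixes f a b c d e :: real
  assumes "f \<noteq> 0"
  shows "a / (f * (b * c)) * f / (d * e) = a / (b * d * (c * e))"
proof -
  have "a / (f * (b * c)) * f = a / (b * c)" using assms by simp
  then have "a / (f * (b * c)) * f / (d * e) = a / (b * c) / (d * e)" by simp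
  also have "\<dots> = a / (b * c * (d * e))" by (simp add: divide_divide_eq_left)
  also have "b * c * (d * e) = b * d * (c * e)" by (simp add: ac_simps)
  finally show ?thesis .
qed

lemma aux4:
  fixes a G H d :: real
  assumes "0 < G"
  shows "a * G / (d * (G * H)) = a / (d * H)"
  using assms by simp

lemma gen_binom_eq:
  fixes \<alpha> :: real
  assumes a0: "0 < \<alpha>" and a1: "\<alpha> < 1"
  shows "gen_binom \<alpha> m * fact m / Gamma (2 + real m - \<alpha>)
       = (-1)^m * \<alpha> / ((\<alpha> - real m) * (real m + 1 - \<alpha>) * Gamma (1 - \<alpha>))"
proof -
  have nz1: "\<alpha> \<notin> \<int>\<^sub>\<le>\<^sub>0" using frac_not_int[OF a0 a1, of 0] by simp
  have nz2: "\<alpha> - real m \<notin> \<int>\<^sub>\<le>\<^sub>0" using frac_not_int[OF a0 a1, of "- real m"] by simp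
  have p3: "real m + 1 - \<alpha> > 0" using a1 by simp
  have nz3: "real m + 1 - \<alpha> \<notin> \<int>\<^sub>\<le>\<^sub>0" using p3 nonpos_Ints_nonpos by fastforce
  have ga: "Gamma (\<alpha> + 1) = \<alpha> * Gamma \<alpha>" using Gamma_plus1[OF nz1] .
  have gm: "Gamma (real m + 1) = fact m" using Gamma_fact[of m, where 'a=real] by (simp add: add.commute)
  have gb: "Gamma (\<alpha> - real m + 1) = (\<alpha> - real m) * Gamma (\<alpha> - real m)" using Gamma_plus1[OF nz2] .
  have gc: "Gamma (2 + real m - \<alpha>) = (real m + 1 - \<alpha>) * Gamma (real m + 1 - \<alpha>)"
    using Gamma_plus1[OF nz3] by (simp add: algebra_simps)
  have R: "Gamma \<alpha> * Gamma (1 - \<alpha>) = (-1)^m * (Gamma (\<alpha> - real m) * Gamma (1 - \<alpha> + real m))"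
    by (rule gamma_refl_shift[OF a0 a1])
  have pos: "Gamma \<alpha> > 0" "Gamma (1 - \<alpha>) > 0" "Gamma (real m + 1 - \<alpha>) > 0" using a0 a1 p3 by auto
  have ne: "Gamma (\<alpha> - real m) \<noteq> 0" using nz2 by (simp add: Gamma_eq_zero_iff)
  have am: "\<alpha> - real m \<noteq> 0" using nz2 by auto
  have fm: "(fact m :: real) \<noteq> 0" by simp
  have e: "1 - \<alpha> + real m = real m + 1 - \<alpha>" by simp
  define P where "P = Gamma (\<alpha> - real m) * Gamma (real m + 1 - \<alpha>)"
  have Pne: "P \<noteq> 0" unfolding P_def using ne pos by simp
  have L: "gen_binom \<alpha> m * fact m / Gamma (2 + real m - \<alpha>)
      = \<alpha> * Gamma \<alpha> / ((\<alpha> - real m) * (real m + 1 - \<alpha>) * P)"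
    unfolding gen_binom_def ga gm gb gc P_def using fm by (rule aux3)
  have R': "Gamma \<alpha> * Gamma (1 - \<alpha>) = (-1)^m * P" using R unfolding P_def e .
  show ?thesis
  proof (cases "even m")
    case True
    then have "P = Gamma \<alpha> * Gamma (1 - \<alpha>)" using R' by simp
    then have "gen_binom \<alpha> m * fact m / Gamma (2 + real m - \<alpha>)
       = \<alpha> / ((\<alpha> - real m) * (real m + 1 - \<alpha>) * Gamma (1 - \<alpha>))"
      unfolding L using pos by (simp only: aux4)
    then show ?thesis using True by simp
  next
    case False
    then have "P = - (Gamma \<alpha> * Gamma (1 - \<alpha>))" using R' by simp
    then have "P = Gamma \<alpha> * (- Gamma (1 - \<alpha>))" by simp
    then have "gen_binom \<alpha> m * fact m / Gamma (2 + real m - \<alpha>)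
       = \<alpha> / ((\<alpha> - real m) * (real m + 1 - \<alpha>) * (- Gamma (1 - \<alpha>)))"
      unfolding L using pos by (simp only: aux4)
    then show ?thesis using False by simp
  qed
qed



lemma alg_aux:
  fixes s p0 p1 S C \<alpha> m :: real
  assumes "\<alpha> - m \<noteq> 0"
  shows "s * p0 * C - s * (m * p1 * S)
       = s * (\<alpha> / (\<alpha> - m)) * (p0 * C) + s * (m / (m - \<alpha>)) * (- (m - \<alpha>) * p1 * S + p0 * C)"
proof -
  define q where "q = m / (\<alpha> - m)"
  have k1: "\<alpha> / (\<alpha> - m) = 1 + q" unfolding q_def using assms by (simp add: field_simps)
  have k2: "m / (m - \<alpha>) = - q" unfolding q_def
    by (metis minus_diff_eq minus_divide_right)
  have k3: "q * (\<alpha> - m) = m" unfolding q_def using assms by simp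
  have k4: "- (m - \<alpha>) = \<alpha> - m" by simp
  have "s * (1 + q) * (p0 * C) + s * (- q) * ((\<alpha> - m) * p1 * S + p0 * C)
      = s * p0 * C - s * ((q * (\<alpha> - m)) * p1 * S)" by (simp add: algebra_simps)
  then show ?thesis unfolding k1 k2 k4 k3 by simp
qed

lemma term_integral:
  fixes \<alpha> \<beta> x :: real and m :: nat
  assumes a0: "0 < \<alpha>" and a1: "\<alpha> < 1" and x: "0 < x"
  shows "((\<lambda>t. (x - t) powr (-\<alpha>) * (\<beta> * cosh (\<beta> * t) * (t - x) ^ m
              + sinh (\<beta> * t) * (of_nat m * (t - x) ^ (m - 1)))) has_integral
          ((-1)^m * (\<alpha> / (\<alpha> - real m)) * (\<beta> * (x powr (real m + 1 - \<alpha>) / (real m + 1 - \<alpha>)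
             * hyp1F2 1 ((real m + 1 - \<alpha> + 1)/2) ((real m + 1 - \<alpha> + 2)/2) (\<beta>^2 * x^2 / 4))))) {0..x}"
proof -
  define \<mu> where "\<mu> = real m + 1 - \<alpha>"
  have mu: "\<mu> > 0" unfolding \<mu>_def using a1 by simp
  define V where "V = \<beta> * (x powr \<mu> / \<mu> * hyp1F2 1 ((\<mu> + 1)/2) ((\<mu> + 2)/2) (\<beta>^2 * x^2 / 4))"
  have J0: "((\<lambda>t. \<beta> * ((x - t) powr (\<mu> - 1) * cosh (\<beta> * t))) has_integral V) {0..x}"
    unfolding V_def by (rule has_integral_mult_right[OF hyp_integral[OF mu x]])
  have J: "((\<lambda>t. (x - t) powr (real m - \<alpha>) * (\<beta> * cosh (\<beta> * t))) has_integral V) {0..x}"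
    using J0 unfolding \<mu>_def by (simp add: ac_simps)
  show ?thesis
  proof (cases "m = 0")
    case True
    then show ?thesis using J a0 unfolding V_def \<mu>_def by simp
  next
    case False
    then have m1: "m \<ge> 1" by simp
    have am: "\<alpha> - real m \<noteq> 0" using a1 m1 by simp
    define \<Phi> where "\<Phi> t = (x - t) powr (real m - \<alpha>) * sinh (\<beta> * t)" for t
    define \<Phi>' where "\<Phi>' t = - (real m - \<alpha>) * (x - t) powr (real m - \<alpha> - 1) * sinh (\<beta> * t)
        + (x - t) powr (real m - \<alpha>) * (\<beta> * cosh (\<beta> * t))" for t
    have ma: "real m - \<alpha> > 0" using a1 m1 by simp
    have cont: "continuous_on {0..x} \<Phi>"
      unfolding \<Phi>_def using ma
      by (intro continuous_intros continuous_on_powr') auto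
    have der: "(\<Phi> has_vector_derivative \<Phi>' t) (at t)" if t: "t \<in> {0<..<x}" for t
    proof -
      have xt: "x - t > 0" using t by simp
      have d0: "((\<lambda>t. x - t) has_real_derivative -1) (at t)"
        by (auto intro!: derivative_eq_intros)
      have d1: "((\<lambda>t. (x - t) powr (real m - \<alpha>)) has_real_derivative
          (real m - \<alpha>) * (x - t) powr (real m - \<alpha> - of_nat 1) * (-1)) (at t)"
        by (rule DERIV_fun_powr[OF d0]) (use xt in simp)
      have d2: "((\<lambda>t. sinh (\<beta> * t)) has_real_derivative cosh (\<beta> * t) * \<beta>) (at t)"
        by (auto intro!: derivative_eq_intros)
      have "(\<Phi> has_real_derivative \<Phi>' t) (at t)"
        unfolding \<Phi>_def
        using DERIV_mult[OF d1 d2] by (rule DERIV_cong) (simp add: \<Phi>'_def algebra_simps)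
      then show ?thesis by (simp add: has_real_derivative_iff_has_vector_derivative)
    qed
    have FT: "(\<Phi>' has_integral (\<Phi> x - \<Phi> 0)) {0..x}"
      by (rule fundamental_theorem_of_calculus_interior[OF _ cont der]) (use x in auto)
    have "\<Phi> x - \<Phi> 0 = 0" unfolding \<Phi>_def by simp
    with FT have FT0: "(\<Phi>' has_integral 0) {0..x}" by simp
    define A where "A = (-1)^m * (\<alpha> / (\<alpha> - real m))"
    define B where "B = (-1)^m * (real m / (real m - \<alpha>))"
    have comb: "((\<lambda>t. A * ((x - t) powr (real m - \<alpha>) * (\<beta> * cosh (\<beta> * t))) + B * \<Phi>' t)
        has_integral (A * V + B * 0)) {0..x}"
      by (intro has_integral_add has_integral_mult_right J FT0)
    show ?thesis
    proof (rule has_integral_spike_finite[of "{0, x}"])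
      show "finite {0, x}" by simp
    next
      fix t assume t: "t \<in> {0..x} - {0, x}"
      then have xt: "x - t > 0" by auto
      have p0: "(x - t) powr (-\<alpha>) * (t - x) ^ m = (-1)^m * (x - t) powr (real m - \<alpha>)"
      proof -
        have "(t - x) ^ m = (-1)^m * (x - t) ^ m"
          by (metis minus_diff_eq power_minus)
        moreover have "(x - t) powr (-\<alpha>) * (x - t) ^ m = (x - t) powr (real m - \<alpha>)"
          using xt by (simp add: powr_realpow[symmetric] powr_add[symmetric])
        ultimately show ?thesis by (metis mult.left_commute)
      qed
      have p1: "(x - t) powr (-\<alpha>) * (t - x) ^ (m - 1) = - ((-1)^m * (x - t) powr (real m - \<alpha> - 1))"
      proof -
        obtain k where k: "m = Suc k" using m1 by (cases m) auto
        have e1: "(t - x) ^ k = (-1)^k * (x - t) ^ k"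
          by (metis minus_diff_eq power_minus)
        have e2: "(x - t) powr (-\<alpha>) * (x - t) ^ k = (x - t) powr (real k - \<alpha>)"
          using xt by (simp add: powr_realpow[symmetric] powr_add[symmetric])
        have e3: "real m - \<alpha> - 1 = real k - \<alpha>" using k by simp
        have e4: "(-1::real)^m = - ((-1)^k)" using k by simp
        have e5: "m - 1 = k" using k by simp
        have "(x - t) powr (-\<alpha>) * (t - x) ^ (m - 1) = (-1)^k * ((x - t) powr (-\<alpha>) * (x - t) ^ k)"
          unfolding e5 e1 by (simp only: ac_simps)
        also have "\<dots> = (-1)^k * (x - t) powr (real k - \<alpha>)" unfolding e2 ..
        also have "\<dots> = - ((-1)^m * (x - t) powr (real m - \<alpha> - 1))" unfolding e3 e4 by simp
        finally show ?thesis .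
      qed
      have "(x - t) powr (-\<alpha>) * (\<beta> * cosh (\<beta> * t) * (t - x) ^ m + sinh (\<beta> * t) * (of_nat m * (t - x) ^ (m - 1)))
          = ((x - t) powr (-\<alpha>) * (t - x) ^ m) * (\<beta> * cosh (\<beta> * t))
            + real m * ((x - t) powr (-\<alpha>) * (t - x) ^ (m - 1)) * sinh (\<beta> * t)"
        by (simp add: algebra_simps)
      also have "\<dots> = (-1)^m * (x - t) powr (real m - \<alpha>) * (\<beta> * cosh (\<beta> * t))
            - (-1)^m * (real m * (x - t) powr (real m - \<alpha> - 1) * sinh (\<beta> * t))"
        unfolding p0 p1 by (simp add: algebra_simps)
      also have "\<dots> = A * ((x - t) powr (real m - \<alpha>) * (\<beta> * cosh (\<beta> * t))) + B * \<Phi>' t"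
        unfolding A_def B_def \<Phi>'_def by (rule alg_aux[OF am])
      finally show "(x - t) powr (-\<alpha>) * (\<beta> * cosh (\<beta> * t) * (t - x) ^ m + sinh (\<beta> * t) * (of_nat m * (t - x) ^ (m - 1)))
          = A * ((x - t) powr (real m - \<alpha>) * (\<beta> * cosh (\<beta> * t))) + B * \<Phi>' t" .
    next
      show "((\<lambda>t. A * ((x - t) powr (real m - \<alpha>) * (\<beta> * cosh (\<beta> * t))) + B * \<Phi>' t) has_integral
          ((-1)^m * (\<alpha> / (\<alpha> - real m)) * (\<beta> * (x powr (real m + 1 - \<alpha>) / (real m + 1 - \<alpha>)
             * hyp1F2 1 ((real m + 1 - \<alpha> + 1)/2) ((real m + 1 - \<alpha> + 2)/2) (\<beta>^2 * x^2 / 4))))) {0..x}"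
        using comb unfolding A_def V_def \<mu>_def by simp
    qed
  qed
qed



lemma aux5:
  fixes g f G a b X H s al d e \<Gamma> :: real
  assumes "g * f / G = s * al / (d * e * \<Gamma>)"
  shows "g * (a * f) * (b * X / G) * H = a * (s * (al / d) * (b * (X / e * H))) / \<Gamma>"
proof -
  have "g * (a * f) * (b * X / G) * H = a * b * X * H * (g * f / G)"
    by (simp add: divide_inverse ac_simps)
  also have "\<dots> = a * b * X * H * (s * al / (d * e * \<Gamma>))" using assms by simp
  also have "\<dots> = a * (s * (al / d) * (b * (X / e * H))) / \<Gamma>"
    by (simp add: divide_inverse ac_simps inverse_mult_distrib)
  finally show ?thesis .
qed

lemma abs_sinh_le_cosh: "\<bar>sinh (y::real)\<bar> \<le> cosh y"
proof -
  have "\<bar>sinh y\<bar>^2 \<le> (cosh y)^2" using cosh_square_eq[of y] by simp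
  then show ?thesis using power2_le_imp_le cosh_real_nonneg by blast
qed

lemma cosh_le_bound:
  fixes \<beta> t x :: real assumes "t \<in> {0..x}"
  shows "cosh (\<beta> * t) \<le> cosh (\<beta> * x)"
proof -
  have "\<bar>\<beta> * t\<bar> \<le> \<bar>\<beta> * x\<bar>" using assms by (auto simp: abs_mult intro: mult_left_mono)
  then have "cosh \<bar>\<beta> * t\<bar> \<le> cosh \<bar>\<beta> * x\<bar>"
    by (subst cosh_real_nonneg_le_iff) auto
  then show ?thesis by simp
qed

lemma deriv_tanh_prod:
  fixes \<beta> t :: real
  defines "s \<equiv> \<lambda>y. 1 / cosh (\<beta> * y)"
  shows "deriv (\<lambda>y. tanh (\<beta> * y)) t = \<beta> * cosh (\<beta> * t) * s t + sinh (\<beta> * t) * deriv s t"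
proof -
  have ds: "(s has_real_derivative (- (sinh (\<beta> * t) * \<beta>) / (cosh (\<beta> * t))^2)) (at t)"
    unfolding s_def by (auto intro!: derivative_eq_intros simp: power2_eq_square)
  then have dse: "deriv s t = - (sinh (\<beta> * t) * \<beta>) / (cosh (\<beta> * t))^2" by (rule DERIV_imp_deriv)
  have d2: "((\<lambda>y. sinh (\<beta> * y)) has_real_derivative cosh (\<beta> * t) * \<beta>) (at t)"
    by (auto intro!: derivative_eq_intros)
  have feq: "(\<lambda>y. tanh (\<beta> * y)) = (\<lambda>y. sinh (\<beta> * y) * s y)"
    by (auto simp: fun_eq_iff tanh_def s_def)
  have "((\<lambda>y. tanh (\<beta> * y)) has_real_derivative
      cosh (\<beta> * t) * \<beta> * s t + deriv s t * sinh (\<beta> * t)) (at t)"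
    unfolding feq using DERIV_mult[OF d2 ds] dse by simp
  then show ?thesis by (simp add: DERIV_imp_deriv algebra_simps)
qed

theorem mainTheorem4:
  fixes \<alpha> \<beta> x :: real
  assumes "0 < \<alpha>" and "\<alpha> < 1" and "0 < x"
  shows "(\<lambda>l. gen_binom \<alpha> l * (deriv ^^ l) (\<lambda>y. 1 / cosh (\<beta> * y)) x
            * (\<beta> * x powr (1 - \<alpha> + real l) / Gamma (2 + real l - \<alpha>))
            * hyp1F2 1 ((2 + real l - \<alpha>) / 2) ((3 + real l - \<alpha>) / 2) (\<beta>\<^sup>2 * x\<^sup>2 / 4))
         sums caputo \<alpha> (\<lambda>y. tanh (\<beta> * y)) x"
proof (cases "\<beta> = 0")
  case True
  have f0: "(\<lambda>y. tanh (\<beta> * y)) = (\<lambda>y. 0::real)" using True by simp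
  have d0: "deriv (\<lambda>y. tanh (\<beta> * y)) t = 0" for t
    unfolding f0 by (rule DERIV_imp_deriv) (rule DERIV_const)
  have "caputo \<alpha> (\<lambda>y. tanh (\<beta> * y)) x = 0" unfolding caputo_def d0 by simp
  then show ?thesis using True by simp
next
  case False
  note a0 = assms(1) and a1 = assms(2) and x = assms(3)
  define s where "s = (\<lambda>y. 1 / cosh (\<beta> * y))"
  define a where "a = (\<lambda>m. (deriv ^^ m) s x / fact m)"
  have T1: "(\<lambda>m. a m * (t - x) ^ m) sums s t" if "t \<in> {0..x}" for t
    using taylor_sech(1)[OF False x that] unfolding s_def a_def .
  have T2: "(\<lambda>m. a m * (of_nat m * (t - x) ^ (m - 1))) sums deriv s t" if "t \<in> {0..x}" for t
    using taylor_sech(2)[OF False x that] unfolding s_def a_def .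
  have S1: "summable (\<lambda>m. \<bar>a m\<bar> * x ^ m)"
    using taylor_sech(3)[OF False x] unfolding s_def a_def .
  have S2: "summable (\<lambda>m. \<bar>a m\<bar> * (of_nat m * x ^ (m - 1)))"
    using taylor_sech(4)[OF False x] unfolding s_def a_def .
  define H where "H m = hyp1F2 1 ((real m + 1 - \<alpha> + 1)/2) ((real m + 1 - \<alpha> + 2)/2) (\<beta>^2 * x^2 / 4)" for m :: nat
  define T where "T m t = a m * ((x - t) powr (-\<alpha>) * (\<beta> * cosh (\<beta> * t) * (t - x) ^ m
              + sinh (\<beta> * t) * (of_nat m * (t - x) ^ (m - 1))))" for m t
  define v where "v m = a m * ((-1)^m * (\<alpha> / (\<alpha> - real m)) * (\<beta> * (x powr (real m + 1 - \<alpha>) / (real m + 1 - \<alpha>)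
             * H m)))" for m
  have TI: "(T m has_integral v m) {0..x}" for m
    unfolding T_def v_def H_def by (rule has_integral_mult_right[OF term_integral[OF a0 a1 x]])
  define P where "P N t = (\<Sum>m<N. T m t)" for N t
  have PI: "(P N has_integral (\<Sum>m<N. v m)) {0..x}" for N
    unfolding P_def by (rule has_integral_sum) (auto intro: TI)
  define g where "g t = (x - t) powr (-\<alpha>) * deriv (\<lambda>y. tanh (\<beta> * y)) t" for t
  have conv: "(\<lambda>N. P N t) \<longlonglongrightarrow> g t" if t: "t \<in> {0..x}" for t
  proof -
    have A: "(\<lambda>m. \<beta> * cosh (\<beta> * t) * (a m * (t - x) ^ m)) sums (\<beta> * cosh (\<beta> * t) * s t)"
      by (rule sums_mult[OF T1[OF t]])
    have B: "(\<lambda>m. sinh (\<beta> * t) * (a m * (of_nat m * (t - x) ^ (m - 1)))) sums (sinh (\<beta> * t) * deriv s t)"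
      by (rule sums_mult[OF T2[OF t]])
    have C: "(\<lambda>m. (x - t) powr (-\<alpha>) * (\<beta> * cosh (\<beta> * t) * (a m * (t - x) ^ m)
        + sinh (\<beta> * t) * (a m * (of_nat m * (t - x) ^ (m - 1)))))
        sums ((x - t) powr (-\<alpha>) * (\<beta> * cosh (\<beta> * t) * s t + sinh (\<beta> * t) * deriv s t))"
      by (rule sums_mult[OF sums_add[OF A B]])
    have e1: "(\<lambda>m. (x - t) powr (-\<alpha>) * (\<beta> * cosh (\<beta> * t) * (a m * (t - x) ^ m)
        + sinh (\<beta> * t) * (a m * (of_nat m * (t - x) ^ (m - 1))))) = (\<lambda>m. T m t)"
      unfolding T_def by (simp add: fun_eq_iff algebra_simps)
    have e2: "(x - t) powr (-\<alpha>) * (\<beta> * cosh (\<beta> * t) * s t + sinh (\<beta> * t) * deriv s t) = g t"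
      unfolding g_def s_def deriv_tanh_prod[of \<beta> t] ..
    from C have "(\<lambda>m. T m t) sums g t" unfolding e1 e2 .
    then show ?thesis unfolding P_def sums_def .
  qed
  define M1 where "M1 = \<bar>\<beta>\<bar> * cosh (\<beta> * x)"
  define M2 where "M2 = cosh (\<beta> * x)"
  define h where "h t = (x - t) powr (-\<alpha>) * (M1 * suminf (\<lambda>m. \<bar>a m\<bar> * x ^ m)
      + M2 * suminf (\<lambda>m. \<bar>a m\<bar> * (of_nat m * x ^ (m - 1))))" for t
  have hI: "h integrable_on {0..x}"
  proof -
    have "1 - \<alpha> > 0" using a1 by simp
    from has_integral_mult_left[OF beta_scaled[OF this x, of 0]]
    have "(\<lambda>t. (x - t) powr (1 - \<alpha> - 1) * t ^ 0 * (M1 * suminf (\<lambda>m. \<bar>a m\<bar> * x ^ m)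
      + M2 * suminf (\<lambda>m. \<bar>a m\<bar> * (of_nat m * x ^ (m - 1))))) integrable_on {0..x}"
      unfolding integrable_on_def by blast
    then show ?thesis unfolding h_def by simp
  qed
  have bound: "norm (P N t) \<le> h t" if t: "t \<in> {0..x}" for N t
  proof -
    define K where "K = (x - t) powr (-\<alpha>)"
    have K0: "K \<ge> 0" unfolding K_def by simp
    have tx: "\<bar>t - x\<bar> \<le> x" using t by auto
    have c1: "\<bar>\<beta> * cosh (\<beta> * t)\<bar> \<le> M1"
      unfolding M1_def using cosh_le_bound[OF t, of \<beta>] by (simp add: abs_mult mult_left_mono)
    have c2: "\<bar>sinh (\<beta> * t)\<bar> \<le> M2"
      unfolding M2_def using cosh_le_bound[OF t, of \<beta>] abs_sinh_le_cosh[of "\<beta> * t"] by linarith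
    have tb: "\<bar>T m t\<bar> \<le> K * (M1 * (\<bar>a m\<bar> * x ^ m) + M2 * (\<bar>a m\<bar> * (of_nat m * x ^ (m - 1))))" for m
    proof -
      have p1: "\<bar>(t - x) ^ m\<bar> \<le> x ^ m" using tx by (simp add: power_abs power_mono)
      have p2: "\<bar>(t - x) ^ (m - 1)\<bar> \<le> x ^ (m - 1)" using tx by (simp add: power_abs power_mono)
      have "\<bar>\<beta> * cosh (\<beta> * t) * (t - x) ^ m + sinh (\<beta> * t) * (of_nat m * (t - x) ^ (m - 1))\<bar>
          \<le> \<bar>\<beta> * cosh (\<beta> * t)\<bar> * \<bar>(t - x) ^ m\<bar> + \<bar>sinh (\<beta> * t)\<bar> * (of_nat m * \<bar>(t - x) ^ (m - 1)\<bar>)"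
        by (rule order_trans[OF abs_triangle_ineq]) (simp add: abs_mult)
      also have "\<dots> \<le> M1 * x ^ m + M2 * (of_nat m * x ^ (m - 1))"
        by (intro add_mono mult_mono mult_left_mono c1 c2 p1 p2) (auto simp: M1_def M2_def)
      finally have le: "\<bar>\<beta> * cosh (\<beta> * t) * (t - x) ^ m + sinh (\<beta> * t) * (of_nat m * (t - x) ^ (m - 1))\<bar>
          \<le> M1 * x ^ m + M2 * (of_nat m * x ^ (m - 1))" .
      have "\<bar>T m t\<bar> = \<bar>a m\<bar> * (K * \<bar>\<beta> * cosh (\<beta> * t) * (t - x) ^ m + sinh (\<beta> * t) * (of_nat m * (t - x) ^ (m - 1))\<bar>)"
        unfolding T_def K_def by (simp add: abs_mult)
      also have "\<dots> \<le> \<bar>a m\<bar> * (K * (M1 * x ^ m + M2 * (of_nat m * x ^ (m - 1))))"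
        by (intro mult_left_mono le K0) auto
      also have "\<dots> = K * (M1 * (\<bar>a m\<bar> * x ^ m) + M2 * (\<bar>a m\<bar> * (of_nat m * x ^ (m - 1))))"
        by (simp add: algebra_simps)
      finally show ?thesis .
    qed
    have M0: "M1 \<ge> 0" "M2 \<ge> 0" unfolding M1_def M2_def by auto
    have "norm (P N t) \<le> (\<Sum>m<N. \<bar>T m t\<bar>)" unfolding P_def by (simp add: sum_abs)
    also have "\<dots> \<le> (\<Sum>m<N. K * (M1 * (\<bar>a m\<bar> * x ^ m) + M2 * (\<bar>a m\<bar> * (of_nat m * x ^ (m - 1)))))"
      by (intro sum_mono tb)
    also have "\<dots> = K * (M1 * (\<Sum>m<N. \<bar>a m\<bar> * x ^ m) + M2 * (\<Sum>m<N. \<bar>a m\<bar> * (of_nat m * x ^ (m - 1))))"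
      by (simp only: sum_distrib_left sum.distrib distrib_left)
    also have "\<dots> \<le> K * (M1 * suminf (\<lambda>m. \<bar>a m\<bar> * x ^ m) + M2 * suminf (\<lambda>m. \<bar>a m\<bar> * (of_nat m * x ^ (m - 1))))"
    proof -
      have "(\<Sum>m<N. \<bar>a m\<bar> * x ^ m) \<le> suminf (\<lambda>m. \<bar>a m\<bar> * x ^ m)"
        by (rule sum_le_suminf[OF S1]) (use x in auto)
      moreover have "(\<Sum>m<N. \<bar>a m\<bar> * (of_nat m * x ^ (m - 1))) \<le> suminf (\<lambda>m. \<bar>a m\<bar> * (of_nat m * x ^ (m - 1)))"
        by (rule sum_le_suminf[OF S2]) (use x in auto)
      ultimately show ?thesis using M0 K0
        by (intro mult_left_mono add_mono) auto
    qed
    also have "\<dots> = h t" unfolding h_def K_def ..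
    finally show ?thesis .
  qed
  note dc = dominated_convergence[of P "{0..x}" h g]
  have Pint: "P N integrable_on {0..x}" for N using PI by blast
  have lim: "(\<lambda>N. \<Sum>m<N. v m) \<longlonglongrightarrow> integral {0..x} g"
    using dc(2)[OF Pint hI bound conv] by (simp add: integral_unique[OF PI])
  then have vs: "v sums integral {0..x} g" by (simp add: sums_def)
  have cap: "caputo \<alpha> (\<lambda>y. tanh (\<beta> * y)) x = integral {0..x} g / Gamma (1 - \<alpha>)"
    unfolding caputo_def g_def by simp
  have vs2: "(\<lambda>m. v m / Gamma (1 - \<alpha>)) sums caputo \<alpha> (\<lambda>y. tanh (\<beta> * y)) x"
    unfolding cap by (rule sums_divide[OF vs])
  have teq: "gen_binom \<alpha> l * (deriv ^^ l) (\<lambda>y. 1 / cosh (\<beta> * y)) x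
            * (\<beta> * x powr (1 - \<alpha> + real l) / Gamma (2 + real l - \<alpha>))
            * hyp1F2 1 ((2 + real l - \<alpha>) / 2) ((3 + real l - \<alpha>) / 2) (\<beta>\<^sup>2 * x\<^sup>2 / 4)
        = v l / Gamma (1 - \<alpha>)" for l
  proof -
    have D: "(deriv ^^ l) (\<lambda>y. 1 / cosh (\<beta> * y)) x = a l * fact l"
      unfolding a_def s_def by simp
    have e1: "1 - \<alpha> + real l = real l + 1 - \<alpha>" by simp
    have e2: "(2 + real l - \<alpha>) / 2 = (real l + 1 - \<alpha> + 1)/2" by simp
    have e3: "(3 + real l - \<alpha>) / 2 = (real l + 1 - \<alpha> + 2)/2" by simp
    show ?thesis unfolding D e1 e2 e3 v_def H_def
      by (rule aux5[OF gen_binom_eq[OF a0 a1]])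
  qed
  show ?thesis unfolding teq by (rule vs2)
qed

end
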